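(* Let $W\in\mathscr{W}$, $m\ge1$ an integer, $k>0$, $b\in(0,1)$, and let $\bar r>0$ satisfy $\Omega(\bar r)=b$. Assume $J(\bar r)<\frac{m^2}{4k^2}$ and let $d_\pm=\frac12\pm\bigl(\frac14-\frac{k^2}{m^2}J(\bar r)\bigr)^{1/2}$ (so $0<d_-<\frac12<d_+<1$). Define $U_\pm(r)=(b-\Omega(r))^{d_\pm}$ for $r>\bar r$. Then there exists $\gamma>0$ such that $\mathscr{L}(U_\pm)\ge\gamma U_\pm'>0$ on $(\bar r,\infty)$, where $\mathscr{L}U=-\partial_r\bigl(\mathcal{A}(r)\partial_r^*U\bigr)+\mathcal{B}_b(r)U$.
   Context: $\Omega(r)=r^{-2}\int_0^rW(s)s\,ds$, $\Phi=2\Omega W$, $J=\Phi/(\Omega')^2$. Class $\mathscr{W}$: $\mathcal{C}^1$ $W:[0,\infty)\to(0,\infty)$ with $W'(0)=0$, $W'<0$ on $(0,\infty)$, $\int_0^\infty Wr\,dr<\infty$, $J'<0$ on $(0,\infty)$, $rJ'(r)\to0$ as $r\to\infty$, $W(0)=2$. $\partial_r^*=\partial_r+\frac1r$, $\mathcal{A}(r)=\frac{r^2}{m^2+k^2r^2}$, $\mathcal{B}_b(r)=1-\frac{k^2}{m^2}\frac{\mathcal{A}(r)\Phi(r)}{(\Omega(r)-b)^2}+\frac{r}{\Omega(r)-b}\partial_r\Bigl(\frac{W(r)}{m^2+k^2r^2}\Bigr)$. *)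

theory Defs
  imports "HOL-Analysis.Analysis"
begin

definition Omega :: "(real \<Rightarrow> real) \<Rightarrow> real \<Rightarrow> real" where
  "Omega W r = integral {0..r} (\<lambda>s. W s * s) / r\<^sup>2"

definition Phi :: "(real \<Rightarrow> real) \<Rightarrow> real \<Rightarrow> real" where
  "Phi W r = 2 * Omega W r * W r"

definition J :: "(real \<Rightarrow> real) \<Rightarrow> real \<Rightarrow> real" where
  "J W r = Phi W r / (deriv (Omega W) r)\<^sup>2"

definition classW :: "(real \<Rightarrow> real) \<Rightarrow> bool" where
  "classW W \<longleftrightarrow>
     (\<exists>W'. (\<forall>r\<ge>0. (W has_real_derivative W' r) (at r within {0..}))
          \<and> continuous_on {0..} W'
          \<and> W' 0 = 0 \<and> (\<forall>r>0. W' r < 0))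
   \<and> (\<forall>r\<ge>0. W r > 0)
   \<and> (\<lambda>r. W r * r) integrable_on {0..}
   \<and> (\<forall>r>0. J W differentiable (at r) \<and> deriv (J W) r < 0)
   \<and> ((\<lambda>r. r * deriv (J W) r) \<longlongrightarrow> 0) at_top
   \<and> W 0 = 2"

definition coefA :: "nat \<Rightarrow> real \<Rightarrow> real \<Rightarrow> real" where
  "coefA m k r = r\<^sup>2 / ((real m)\<^sup>2 + k\<^sup>2 * r\<^sup>2)"

definition coefB :: "(real \<Rightarrow> real) \<Rightarrow> nat \<Rightarrow> real \<Rightarrow> real \<Rightarrow> real \<Rightarrow> real" where
  "coefB W m k b r = 1 - k\<^sup>2 / (real m)\<^sup>2 * coefA m k r * Phi W r / (Omega W r - b)\<^sup>2
     + r / (Omega W r - b) * deriv (\<lambda>s. W s / ((real m)\<^sup>2 + k\<^sup>2 * s\<^sup>2)) r"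

definition opL :: "(real \<Rightarrow> real) \<Rightarrow> nat \<Rightarrow> real \<Rightarrow> real \<Rightarrow> (real \<Rightarrow> real) \<Rightarrow> real \<Rightarrow> real" where
  "opL W m k b U r = - deriv (\<lambda>s. coefA m k s * (deriv U s + U s / s)) r + coefB W m k b r * U r"

end

theory Submission
  imports Defs
begin


lemma W_facts:
  fixes W Wd :: "real \<Rightarrow> real"
  assumes dW: "\<forall>r\<ge>0. (W has_real_derivative Wd r) (at r within {0..})"
  shows "continuous_on {0..} W"
    and "\<And>s. s > 0 \<Longrightarrow> (W has_real_derivative Wd s) (at s)"
proof -
  show "continuous_on {0..} W"
    unfolding continuous_on_eq_continuous_within
    using dW by (auto intro: DERIV_continuous)
  fix s :: real assume "s > 0"
  then have "at s within {0..} = at s" by (intro at_within_interior) auto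
  moreover have "(W has_real_derivative Wd s) (at s within {0..})" using dW \<open>s>0\<close> by simp
  ultimately show "(W has_real_derivative Wd s) (at s)" by simp
qed

lemma I_deriv:
  fixes W :: "real \<Rightarrow> real"
  assumes cW: "continuous_on {0..} W" and s: "s \<ge> 0" and t: "t > s"
  shows "((\<lambda>r. integral {0..r} (\<lambda>u. W u * u)) has_real_derivative W s * s) (at s within {0..t})"
proof -
  have "continuous_on {0..t} (\<lambda>u. W u * u)"
    by (intro continuous_intros continuous_on_subset[OF cW]) auto
  from integral_has_real_derivative[OF this, of s] s t show ?thesis by auto
qed

lemma I_deriv_at:
  fixes W :: "real \<Rightarrow> real"
  assumes cW: "continuous_on {0..} W" and s: "s > 0"
  shows "((\<lambda>r. integral {0..r} (\<lambda>u. W u * u)) has_real_derivative W s * s) (at s)"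
proof -
  have "at s within {0..s+1} = at s" by (intro at_within_interior) (use s in auto)
  with I_deriv[OF cW, of s "s+1"] s show ?thesis by auto
qed

lemma Omega_deriv:
  fixes W :: "real \<Rightarrow> real"
  assumes cW: "continuous_on {0..} W" and s: "s > 0"
  shows "(Omega W has_real_derivative (W s - 2 * Omega W s) / s) (at s)"
proof -
  have e: "Omega W = (\<lambda>r. integral {0..r} (\<lambda>u. W u * u) / r\<^sup>2)"
    by (rule ext) (simp add: Omega_def)
  have "((\<lambda>r. integral {0..r} (\<lambda>u. W u * u) / r\<^sup>2) has_real_derivative
     ((W s * s) * s\<^sup>2 - integral {0..s} (\<lambda>u. W u * u) * (2 * s)) / (s\<^sup>2)\<^sup>2) (at s)"
    using s by (auto intro!: derivative_eq_intros I_deriv_at[OF cW s])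
  moreover have "((W s * s) * s\<^sup>2 - integral {0..s} (\<lambda>u. W u * u) * (2 * s)) / (s\<^sup>2)\<^sup>2
      = (W s - 2 * Omega W s) / s"
    using s by (simp add: Omega_def field_simps power2_eq_square)
  ultimately show ?thesis by (simp add: e)
qed

lemma Omega_gt:
  fixes W Wd :: "real \<Rightarrow> real"
  assumes dW: "\<forall>r\<ge>0. (W has_real_derivative Wd r) (at r within {0..})"
    and neg: "\<forall>r>0. Wd r < 0" and s: "s > 0"
  shows "2 * Omega W s > W s"
proof -
  note cW = W_facts(1)[OF dW]
  define g where "g = (\<lambda>r. 2 * integral {0..r} (\<lambda>u. W u * u) - W r * r\<^sup>2)"
  have "g 0 < g s"
  proof (rule DERIV_pos_imp_increasing_open[OF s])
    fix x assume x: "0 < x" "x < s"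
    have "(g has_real_derivative 2 * (W x * x) - (Wd x * x\<^sup>2 + W x * (2 * x))) (at x)"
      unfolding g_def using x
      by (auto intro!: derivative_eq_intros I_deriv_at[OF cW] W_facts(2)[OF dW])
    moreover have "2 * (W x * x) - (Wd x * x\<^sup>2 + W x * (2 * x)) > 0"
    proof -
      have "Wd x < 0" using neg x by auto
      then have "x * (x * Wd x) < 0" using x by (simp add: mult_pos_neg)
      then show ?thesis by (simp add: algebra_simps power2_eq_square)
    qed
    ultimately show "\<exists>y. (g has_real_derivative y) (at x) \<and> y > 0" by blast
  next
    have c1: "continuous_on {0..s} (\<lambda>r. integral {0..r} (\<lambda>u. W u * u))"
      unfolding continuous_on_eq_continuous_within
    proof
      fix x assume x: "x \<in> {0..s}"
      have "continuous (at x within {0..s+1}) (\<lambda>r. integral {0..r} (\<lambda>u. W u * u))"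
        using x by (intro DERIV_continuous[OF I_deriv[OF cW]]) auto
      then show "continuous (at x within {0..s}) (\<lambda>r. integral {0..r} (\<lambda>u. W u * u))"
        by (rule continuous_within_subset) auto
    qed
    show "continuous_on {0..s} g" unfolding g_def
      by (intro continuous_intros c1 continuous_on_subset[OF cW]) auto
  qed
  then have "2 * integral {0..s} (\<lambda>u. W u * u) > W s * s\<^sup>2" by (simp add: g_def)
  then show ?thesis using s by (simp add: Omega_def field_simps)
qed


lemma key_alg:
  fixes p w r o1 o2 w1 :: real
  assumes "p > 0" "w > 0" "r > 0" "o1 < 0" "r * o1 = w - 2 * p" "w1 = r * o2 + 3 * o1"
    and J: "(2 * (o1 * w + p * w1) * o1\<^sup>2 - 2 * p * w * (2 * o1 * o2)) / (o1\<^sup>2)\<^sup>2 \<le> 0"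
  shows "r * o2 \<le> - 3 * o1"
proof (rule ccontr)
  assume c: "\<not> r * o2 \<le> - 3 * o1"
  have p4: "(o1\<^sup>2)\<^sup>2 > 0" using assms by simp
  have N: "2 * (o1 * w + p * w1) * o1\<^sup>2 - 2 * p * w * (2 * o1 * o2) \<le> 0"
    using J p4 by (simp add: divide_le_0_iff)
  have eq: "2 * (o1 * w + p * w1) * o1\<^sup>2 - 2 * p * w * (2 * o1 * o2)
      = o1 * (2 * o1\<^sup>2 * w + 6 * p * o1\<^sup>2 + o2 * (2 * p * o1 * r - 4 * p * w))"
    using assms(6) by (simp add: algebra_simps power2_eq_square)
  have M: "2 * o1\<^sup>2 * w + 6 * p * o1\<^sup>2 + o2 * (2 * p * o1 * r - 4 * p * w) \<ge> 0"
    using N eq assms(4) by (smt (verit) mult_neg_neg)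
  have cneg: "2 * p * o1 * r - 4 * p * w < 0"
  proof -
    have "p * o1 * r < 0" using assms by (simp add: mult_pos_neg mult_neg_pos)
    moreover have "p * w > 0" using assms by simp
    ultimately show ?thesis by linarith
  qed
  have o2gt: "o2 > - 3 * o1 / r" using c assms(3) by (simp add: field_simps)
  have "o2 * (2 * p * o1 * r - 4 * p * w) < (- 3 * o1 / r) * (2 * p * o1 * r - 4 * p * w)"
    using mult_strict_right_mono_neg[OF o2gt cneg] .
  also have "(- 3 * o1 / r) * (2 * p * o1 * r - 4 * p * w) = -6 * p * o1\<^sup>2 + 12 * p * w * o1 / r"
    using assms(3) by (simp add: field_simps power2_eq_square)
  finally have "2 * o1\<^sup>2 * w + 6 * p * o1\<^sup>2 + o2 * (2 * p * o1 * r - 4 * p * w)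
       < 2 * o1 * w * ((r * o1 + 6 * p) / r)"
    using assms(3) by (simp add: field_simps power2_eq_square)
  moreover have "(r * o1 + 6 * p) / r > 0" using assms by simp
  moreover have "2 * o1 * w < 0" using assms by (simp add: mult_neg_pos)
  ultimately have "2 * o1\<^sup>2 * w + 6 * p * o1\<^sup>2 + o2 * (2 * p * o1 * r - 4 * p * w) < 0"
    by (smt (verit) mult_neg_pos)
  with M show False by linarith
qed


definition Om1 :: "(real \<Rightarrow> real) \<Rightarrow> real \<Rightarrow> real" where
  "Om1 W s = (W s - 2 * Omega W s) / s"

lemma Om1_deriv:
  fixes W Wd :: "real \<Rightarrow> real"
  assumes dW: "\<forall>r\<ge>0. (W has_real_derivative Wd r) (at r within {0..})" and s: "s > 0"
  shows "(Om1 W has_real_derivative (Wd s - 3 * Om1 W s) / s) (at s)"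
proof -
  note cW = W_facts(1)[OF dW]
  have e: "Om1 W = (\<lambda>r. (W r - 2 * Omega W r) / r)" by (rule ext) (simp add: Om1_def)
  have "((\<lambda>r. (W r - 2 * Omega W r) / r) has_real_derivative
      ((Wd s - 2 * ((W s - 2 * Omega W s) / s)) * s - (W s - 2 * Omega W s) * 1) / (s * s)) (at s)"
    using s by (auto intro!: derivative_eq_intros W_facts(2)[OF dW] Omega_deriv[OF cW])
  moreover have "((Wd s - 2 * ((W s - 2 * Omega W s) / s)) * s - (W s - 2 * Omega W s) * 1) / (s * s)
     = (Wd s - 3 * Om1 W s) / s"
    using s by (simp add: Om1_def field_simps)
  ultimately show ?thesis by (simp add: e)
qed

lemma Omega_deriv':
  fixes W Wd :: "real \<Rightarrow> real"
  assumes dW: "\<forall>r\<ge>0. (W has_real_derivative Wd r) (at r within {0..})" and s: "s > 0"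
  shows "(Omega W has_real_derivative Om1 W s) (at s)" "deriv (Omega W) s = Om1 W s"
proof -
  show "(Omega W has_real_derivative Om1 W s) (at s)"
    using Omega_deriv[OF W_facts(1)[OF dW] s] by (simp add: Om1_def)
  then show "deriv (Omega W) s = Om1 W s" by (rule DERIV_imp_deriv)
qed

lemma Om1_neg:
  fixes W Wd :: "real \<Rightarrow> real"
  assumes dW: "\<forall>r\<ge>0. (W has_real_derivative Wd r) (at r within {0..})"
    and neg: "\<forall>r>0. Wd r < 0" and s: "s > 0"
  shows "Om1 W s < 0"
  using Omega_gt[OF dW neg s] s by (simp add: Om1_def divide_neg_pos)

lemma J_eq:
  fixes W Wd :: "real \<Rightarrow> real"
  assumes dW: "\<forall>r\<ge>0. (W has_real_derivative Wd r) (at r within {0..})" and s: "s > 0"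
  shows "J W s = 2 * Omega W s * W s / (Om1 W s)\<^sup>2"
  using Omega_deriv'(2)[OF dW s] by (simp add: J_def Phi_def)

lemma J_deriv:
  fixes W Wd :: "real \<Rightarrow> real"
  assumes dW: "\<forall>r\<ge>0. (W has_real_derivative Wd r) (at r within {0..})"
    and neg: "\<forall>r>0. Wd r < 0" and s: "s > 0"
  shows "(J W has_real_derivative
     (2 * (Om1 W s * W s + Omega W s * Wd s) * (Om1 W s)\<^sup>2
       - 2 * Omega W s * W s * (2 * Om1 W s * ((Wd s - 3 * Om1 W s) / s))) / ((Om1 W s)\<^sup>2)\<^sup>2) (at s)"
proof -
  have ne: "Om1 W s \<noteq> 0" using Om1_neg[OF dW neg s] by simp
  have "((\<lambda>r. 2 * Omega W r * W r / (Om1 W r)\<^sup>2) has_real_derivative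
     (2 * (Om1 W s * W s + Omega W s * Wd s) * (Om1 W s)\<^sup>2
       - 2 * Omega W s * W s * (2 * Om1 W s * ((Wd s - 3 * Om1 W s) / s))) / ((Om1 W s)\<^sup>2)\<^sup>2) (at s)"
    using s ne
    by (auto intro!: derivative_eq_intros W_facts(2)[OF dW] Omega_deriv'(1)[OF dW] Om1_deriv[OF dW]
        simp: field_simps power2_eq_square)
  then show ?thesis
    by (rule has_field_derivative_transform_within_open[where S="{0<..}"])
       (use s J_eq[OF dW] in auto)
qed


lemma alg_main:
  fixes P f q o2 p w wd d k mm r jb :: real
  assumes P: "P > 0" and f: "f > 0" and q: "q > 0" and r: "r > 0" and k: "k > 0" and mm: "mm \<ge> 1"
    and d0: "0 < d" and d1: "d \<le> 1" and w: "w > 0"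
    and dd: "d * (d - 1) = - (k\<^sup>2 / mm\<^sup>2) * jb"
    and jj: "2 * p * w / q\<^sup>2 \<le> jb"
    and o2: "r * o2 \<le> 3 * q"
    and wd: "wd = r * o2 - 3 * q"
  defines "D \<equiv> mm\<^sup>2 + k\<^sup>2 * r\<^sup>2"
  shows "- (2 * r * mm\<^sup>2 / D\<^sup>2 * (d * (P / f) * q + P / r)
            + r\<^sup>2 / D * (d * ((d - 1) * (P / f\<^sup>2) * q) * q + d * (P / f) * (- o2)
                          + (d * (P / f) * q * r - P) / r\<^sup>2))
         + (1 - k\<^sup>2 / mm\<^sup>2 * (r\<^sup>2 / D) * (2 * p * w) / f\<^sup>2
              + r / (- f) * ((wd * D - w * (2 * k\<^sup>2 * r)) / D\<^sup>2)) * P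
       \<ge> P / f * (2 * d * k\<^sup>2 * r ^ 3 * q / D\<^sup>2 + f * (1 + (k\<^sup>2 * r\<^sup>2 - mm\<^sup>2) / D\<^sup>2))"
proof -
  have Dpos: "D > 0" unfolding D_def using mm by (simp add: add_pos_nonneg)
  define Z where "Z = - 2 * r * mm\<^sup>2 / D\<^sup>2 * d * q - 2 * r * mm\<^sup>2 / D\<^sup>2 * f / r
     + r\<^sup>2 / D * d * o2 - r\<^sup>2 / D * d * q / r + r\<^sup>2 / D * f / r\<^sup>2 + f
     - (r * ((wd * D - w * (2 * k\<^sup>2 * r)) / D\<^sup>2))"
  have id1: "- (2 * r * mm\<^sup>2 / D\<^sup>2 * (d * (P / f) * q + P / r)
            + r\<^sup>2 / D * (d * ((d - 1) * (P / f\<^sup>2) * q) * q + d * (P / f) * (- o2)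
                          + (d * (P / f) * q * r - P) / r\<^sup>2))
         + (1 - k\<^sup>2 / mm\<^sup>2 * (r\<^sup>2 / D) * (2 * p * w) / f\<^sup>2
              + r / (- f) * ((wd * D - w * (2 * k\<^sup>2 * r)) / D\<^sup>2)) * P
       = r\<^sup>2 / D * P / f\<^sup>2 * (- d * (d - 1) * q\<^sup>2 - k\<^sup>2 / mm\<^sup>2 * (2 * p * w)) + P / f * Z"
    unfolding Z_def using Dpos f r mm
    by (simp add: field_simps power2_eq_square)
  have t1: "- d * (d - 1) * q\<^sup>2 - k\<^sup>2 / mm\<^sup>2 * (2 * p * w) = k\<^sup>2 / mm\<^sup>2 * (jb * q\<^sup>2 - 2 * p * w)"
  proof -
    have e: "- d * (d - 1) = k\<^sup>2 / mm\<^sup>2 * jb" using dd by simp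
    have "- d * (d - 1) * q\<^sup>2 = k\<^sup>2 / mm\<^sup>2 * jb * q\<^sup>2" by (simp only: e)
    then show ?thesis by (simp add: algebra_simps)
  qed
  have "jb * q\<^sup>2 - 2 * p * w \<ge> 0" using jj q by (simp add: field_simps)
  then have t1n: "r\<^sup>2 / D * P / f\<^sup>2 * (- d * (d - 1) * q\<^sup>2 - k\<^sup>2 / mm\<^sup>2 * (2 * p * w)) \<ge> 0"
    unfolding t1 using Dpos P f by simp
  have hk: "k\<^sup>2 * r\<^sup>2 = D - mm\<^sup>2" unfolding D_def by simp
  have hw: "r * ((wd * D - w * (2 * k\<^sup>2 * r)) / D\<^sup>2) = (r * wd * D - 2 * w * (D - mm\<^sup>2)) / D\<^sup>2"
  proof -
    have "r * (wd * D - w * (2 * k\<^sup>2 * r)) = r * wd * D - 2 * w * (k\<^sup>2 * r\<^sup>2)"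
      by (simp add: algebra_simps power2_eq_square)
    then show ?thesis unfolding hk by simp
  qed
  have id2a: "Z = 2 * d * r * q * (D - mm\<^sup>2) / D\<^sup>2 + f * (1 + (D - 2 * mm\<^sup>2) / D\<^sup>2)
      + 2 * (D - mm\<^sup>2) * w / D\<^sup>2 + (1 - d) * (r\<^sup>2 / D) * (3 * q / r - o2)"
    unfolding Z_def hw unfolding wd using Dpos r
    by (simp add: field_simps power2_eq_square)
  have e3: "2 * d * k\<^sup>2 * r ^ 3 * q / D\<^sup>2 = 2 * d * r * q * (D - mm\<^sup>2) / D\<^sup>2"
  proof -
    have "2 * d * k\<^sup>2 * r ^ 3 * q = 2 * d * r * q * (k\<^sup>2 * r\<^sup>2)"
      by (simp add: algebra_simps power2_eq_square power3_eq_cube)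
    then show ?thesis unfolding hk by simp
  qed
  have e4: "k\<^sup>2 * r\<^sup>2 - mm\<^sup>2 = D - 2 * mm\<^sup>2" unfolding hk by simp
  have id2: "Z = 2 * d * k\<^sup>2 * r ^ 3 * q / D\<^sup>2 + f * (1 + (k\<^sup>2 * r\<^sup>2 - mm\<^sup>2) / D\<^sup>2)
      + 2 * (D - mm\<^sup>2) * w / D\<^sup>2 + (1 - d) * (r\<^sup>2 / D) * (3 * q / r - o2)"
    unfolding id2a e3 e4 ..
  have "(1 - d) * (r\<^sup>2 / D) * (3 * q / r - o2) \<ge> 0"
    using d1 Dpos o2 r by (intro mult_nonneg_nonneg) (auto simp: field_simps)
  moreover have "2 * (D - mm\<^sup>2) * w / D\<^sup>2 \<ge> 0" using w hk by (simp add: hk[symmetric])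
  ultimately have "Z \<ge> 2 * d * k\<^sup>2 * r ^ 3 * q / D\<^sup>2 + f * (1 + (k\<^sup>2 * r\<^sup>2 - mm\<^sup>2) / D\<^sup>2)"
    unfolding id2 by linarith
  then have "P / f * Z \<ge> P / f * (2 * d * k\<^sup>2 * r ^ 3 * q / D\<^sup>2 + f * (1 + (k\<^sup>2 * r\<^sup>2 - mm\<^sup>2) / D\<^sup>2))"
    using P f by (intro mult_left_mono) auto
  with t1n show ?thesis unfolding id1 by linarith
qed


lemma pointwise:
  fixes W Wd :: "real \<Rightarrow> real" and m :: nat and k b rbar d r :: real
  assumes dW: "\<forall>r\<ge>0. (W has_real_derivative Wd r) (at r within {0..})"
    and neg: "\<forall>r>0. Wd r < 0" and pos: "\<forall>r\<ge>0. W r > 0"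
    and k: "k > 0" and m: "m \<ge> 1" and rbar: "rbar > 0" and r: "r > rbar"
    and below: "\<forall>s>rbar. Omega W s < b"
    and d0: "0 < d" and d1: "d \<le> 1"
    and dd: "d * (d - 1) = - (k\<^sup>2 / (real m)\<^sup>2) * J W rbar"
    and jj: "J W r \<le> J W rbar" and dJ: "deriv (J W) r \<le> 0"
  shows "deriv (\<lambda>s. (b - Omega W s) powr d) r
           = d * (- Om1 W r) * ((b - Omega W r) powr d / (b - Omega W r))"
    and "opL W m k b (\<lambda>s. (b - Omega W s) powr d) r \<ge>
         (b - Omega W r) powr d / (b - Omega W r) *
           (2 * d * k\<^sup>2 * r ^ 3 * (- Om1 W r) / ((real m)\<^sup>2 + k\<^sup>2 * r\<^sup>2)\<^sup>2
            + (b - Omega W r) * (1 + (k\<^sup>2 * r\<^sup>2 - (real m)\<^sup>2) / ((real m)\<^sup>2 + k\<^sup>2 * r\<^sup>2)\<^sup>2))"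
proof -
  define mm where "mm = real m"
  define f where "f = (\<lambda>s. b - Omega W s)"
  define g0 where "g0 = (\<lambda>s. f s powr d)"
  define g1 where "g1 = (\<lambda>s. f s powr (d - 1))"
  define O1 where "O1 = Om1 W"
  have U: "(\<lambda>s. (b - Omega W s) powr d) = g0" by (simp add: g0_def f_def)
  have r0: "r > 0" using r rbar by simp
  have fpos: "\<And>s. s > rbar \<Longrightarrow> f s > 0" using below by (simp add: f_def)
  have hf: "\<And>s. s > 0 \<Longrightarrow> (f has_real_derivative - O1 s) (at s)"
    unfolding f_def O1_def
    by (auto intro!: derivative_eq_intros Omega_deriv'(1)[OF dW])
  have hg0: "\<And>s. s > rbar \<Longrightarrow> (g0 has_real_derivative d * g1 s * (- O1 s)) (at s)"
  proof -
    fix s assume s: "s > rbar"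
    from DERIV_fun_powr[OF hf fpos[OF s], of d] s rbar
    show "(g0 has_real_derivative d * g1 s * (- O1 s)) (at s)"
      by (simp add: g0_def g1_def)
  qed
  have hg1: "\<And>s. s > rbar \<Longrightarrow> (g1 has_real_derivative (d - 1) * f s powr (d - 1 - 1) * (- O1 s)) (at s)"
  proof -
    fix s assume s: "s > rbar"
    from DERIV_fun_powr[OF hf fpos[OF s], of "d - 1"] s rbar
    show "(g1 has_real_derivative (d - 1) * f s powr (d - 1 - 1) * (- O1 s)) (at s)"
      by (simp add: g1_def)
  qed
  have hO1: "\<And>s. s > 0 \<Longrightarrow> (O1 has_real_derivative (Wd s - 3 * O1 s) / s) (at s)"
    unfolding O1_def by (rule Om1_deriv[OF dW])
  have dg0: "\<And>s. s > rbar \<Longrightarrow> deriv g0 s = d * g1 s * (- O1 s)"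
    using hg0 DERIV_imp_deriv by blast
  have fr: "f r > 0" using fpos[OF r] .
  have g1r: "g1 r = g0 r / f r" using fr by (simp add: g0_def g1_def powr_diff)
  have g2r: "f r powr (d - 1 - 1) = g0 r / (f r)\<^sup>2"
    using fr by (simp add: g0_def powr_diff power2_eq_square)
  show "deriv (\<lambda>s. (b - Omega W s) powr d) r
           = d * (- Om1 W r) * ((b - Omega W r) powr d / (b - Omega W r))"
    unfolding U dg0[OF r] g1r by (simp add: g0_def f_def O1_def)
  define D where "D = mm\<^sup>2 + k\<^sup>2 * r\<^sup>2"
  have mm1: "mm \<ge> 1" using m by (simp add: mm_def)
  have Dpos: "D > 0" unfolding D_def using mm1 by (simp add: add_pos_nonneg)
  have Dne: "(real m)\<^sup>2 + k\<^sup>2 * r\<^sup>2 \<noteq> 0" using Dpos by (simp add: D_def mm_def)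
  define F where "F = (\<lambda>s. coefA m k s * (d * g1 s * (- O1 s) + g0 s / s))"
  define X where "X = (2 * r * D - r\<^sup>2 * (2 * k\<^sup>2 * r)) / D\<^sup>2 * (d * g1 r * (- O1 r) + g0 r / r)
     + r\<^sup>2 / D * (d * ((d - 1) * f r powr (d - 1 - 1) * (- O1 r)) * (- O1 r)
        + d * g1 r * (- ((Wd r - 3 * O1 r) / r)) + (d * g1 r * (- O1 r) * r - g0 r) / r\<^sup>2)"
  have hF: "(F has_real_derivative X) (at r)"
    unfolding F_def coefA_def X_def
    apply (rule derivative_eq_intros hg0[OF r] hg1[OF r] hO1[OF r0] refl | simp add: Dne r0[THEN less_imp_neq, symmetric])+
    apply (simp add: D_def mm_def field_simps power2_eq_square)
    done
  have hF2: "((\<lambda>s. coefA m k s * (deriv g0 s + g0 s / s)) has_real_derivative X) (at r)"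
    by (rule has_field_derivative_transform_within_open[OF hF, where S="{rbar<..}"])
       (use r in \<open>auto simp: F_def dg0\<close>)
  have dOut: "deriv (\<lambda>s. coefA m k s * (deriv g0 s + g0 s / s)) r = X"
    using hF2 by (rule DERIV_imp_deriv)
  have dWq: "deriv (\<lambda>s. W s / ((real m)\<^sup>2 + k\<^sup>2 * s\<^sup>2)) r
      = (Wd r * D - W r * (2 * k\<^sup>2 * r)) / D\<^sup>2"
  proof (rule DERIV_imp_deriv)
    show "((\<lambda>s. W s / ((real m)\<^sup>2 + k\<^sup>2 * s\<^sup>2)) has_real_derivative
        (Wd r * D - W r * (2 * k\<^sup>2 * r)) / D\<^sup>2) (at r)"
      apply (rule derivative_eq_intros W_facts(2)[OF dW r0] refl | simp add: Dne)+
      apply (simp add: D_def mm_def field_simps power2_eq_square)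
      done
  qed
  have p0: "Omega W r > 0" and w0: "W r > 0"
  proof -
    show w0: "W r > 0" using pos r0 by auto
    show "Omega W r > 0" using Omega_gt[OF dW neg r0] w0 by linarith
  qed
  have o1n: "O1 r < 0" unfolding O1_def by (rule Om1_neg[OF dW neg r0])
  have dJr: "deriv (J W) r = (2 * (O1 r * W r + Omega W r * Wd r) * (O1 r)\<^sup>2
       - 2 * Omega W r * W r * (2 * O1 r * ((Wd r - 3 * O1 r) / r))) / ((O1 r)\<^sup>2)\<^sup>2"
    unfolding O1_def by (rule DERIV_imp_deriv[OF J_deriv[OF dW neg r0]])
  have ko2: "r * ((Wd r - 3 * O1 r) / r) \<le> - 3 * O1 r"
  proof (rule key_alg[OF p0 w0 r0 o1n])
    show "r * O1 r = W r - 2 * Omega W r" using r0 by (simp add: O1_def Om1_def)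
    show "Wd r = r * ((Wd r - 3 * O1 r) / r) + 3 * O1 r" using r0 by simp
    show "(2 * (O1 r * W r + Omega W r * Wd r) * (O1 r)\<^sup>2 -
        2 * Omega W r * W r * (2 * O1 r * ((Wd r - 3 * O1 r) / r))) / ((O1 r)\<^sup>2)\<^sup>2 \<le> 0"
      using dJ dJr by simp
  qed
  have jj2: "2 * Omega W r * W r / (- O1 r)\<^sup>2 \<le> J W rbar"
    using jj J_eq[OF dW r0] by (simp add: O1_def)
  have P0: "g0 r > 0" using fr by (simp add: g0_def)
  have alg: "- (2 * r * (real m)\<^sup>2 / ((real m)\<^sup>2 + k\<^sup>2 * r\<^sup>2)\<^sup>2 * (d * (g0 r / f r) * (- O1 r) + g0 r / r)
            + r\<^sup>2 / ((real m)\<^sup>2 + k\<^sup>2 * r\<^sup>2) * (d * ((d - 1) * (g0 r / (f r)\<^sup>2) * (- O1 r)) * (- O1 r)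
                 + d * (g0 r / f r) * (- ((Wd r - 3 * O1 r) / r))
                 + (d * (g0 r / f r) * (- O1 r) * r - g0 r) / r\<^sup>2))
         + (1 - k\<^sup>2 / (real m)\<^sup>2 * (r\<^sup>2 / ((real m)\<^sup>2 + k\<^sup>2 * r\<^sup>2)) * (2 * Omega W r * W r) / (f r)\<^sup>2
              + r / (- f r) * ((Wd r * ((real m)\<^sup>2 + k\<^sup>2 * r\<^sup>2) - W r * (2 * k\<^sup>2 * r))
                   / ((real m)\<^sup>2 + k\<^sup>2 * r\<^sup>2)\<^sup>2)) * g0 r
       \<ge> g0 r / f r * (2 * d * k\<^sup>2 * r ^ 3 * (- O1 r) / ((real m)\<^sup>2 + k\<^sup>2 * r\<^sup>2)\<^sup>2
            + f r * (1 + (k\<^sup>2 * r\<^sup>2 - (real m)\<^sup>2) / ((real m)\<^sup>2 + k\<^sup>2 * r\<^sup>2)\<^sup>2))"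
    by (rule alg_main[OF P0 fr _ r0 k _ d0 d1 w0 dd jj2 _ _])
       (use o1n m ko2 r0 in auto)
  have coefeq: "(2 * r * D - r\<^sup>2 * (2 * k\<^sup>2 * r)) / D\<^sup>2 = 2 * r * (real m)\<^sup>2 / ((real m)\<^sup>2 + k\<^sup>2 * r\<^sup>2)\<^sup>2"
    by (simp add: D_def mm_def algebra_simps power2_eq_square)
  have fb: "Omega W r - b = - f r" by (simp add: f_def)
  have eqL: "opL W m k b (\<lambda>s. (b - Omega W s) powr d) r =
         - (2 * r * (real m)\<^sup>2 / ((real m)\<^sup>2 + k\<^sup>2 * r\<^sup>2)\<^sup>2 * (d * (g0 r / f r) * (- O1 r) + g0 r / r)
            + r\<^sup>2 / ((real m)\<^sup>2 + k\<^sup>2 * r\<^sup>2) * (d * ((d - 1) * (g0 r / (f r)\<^sup>2) * (- O1 r)) * (- O1 r)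
                 + d * (g0 r / f r) * (- ((Wd r - 3 * O1 r) / r))
                 + (d * (g0 r / f r) * (- O1 r) * r - g0 r) / r\<^sup>2))
         + (1 - k\<^sup>2 / (real m)\<^sup>2 * (r\<^sup>2 / ((real m)\<^sup>2 + k\<^sup>2 * r\<^sup>2)) * (2 * Omega W r * W r) / (f r)\<^sup>2
              + r / (- f r) * ((Wd r * ((real m)\<^sup>2 + k\<^sup>2 * r\<^sup>2) - W r * (2 * k\<^sup>2 * r))
                   / ((real m)\<^sup>2 + k\<^sup>2 * r\<^sup>2)\<^sup>2)) * g0 r"
    unfolding opL_def U dOut coefB_def dWq unfolding X_def Phi_def coefA_def g1r g2r coefeq fb
    by (simp add: D_def mm_def power2_minus)
  show "opL W m k b (\<lambda>s. (b - Omega W s) powr d) r \<ge>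
         (b - Omega W r) powr d / (b - Omega W r) *
           (2 * d * k\<^sup>2 * r ^ 3 * (- Om1 W r) / ((real m)\<^sup>2 + k\<^sup>2 * r\<^sup>2)\<^sup>2
            + (b - Omega W r) * (1 + (k\<^sup>2 * r\<^sup>2 - (real m)\<^sup>2) / ((real m)\<^sup>2 + k\<^sup>2 * r\<^sup>2)\<^sup>2))"
    using alg unfolding eqL by (simp add: g0_def f_def O1_def)
qed


lemma Omega_decr:
  fixes W Wd :: "real \<Rightarrow> real"
  assumes dW: "\<forall>r\<ge>0. (W has_real_derivative Wd r) (at r within {0..})"
    and neg: "\<forall>r>0. Wd r < 0" and x: "0 < x" and xy: "x < y"
  shows "Omega W y < Omega W x"
proof (rule DERIV_neg_imp_decreasing[OF xy])
  fix t assume t: "x \<le> t" "t \<le> y"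
  then have t0: "t > 0" using x by simp
  show "\<exists>z. (Omega W has_real_derivative z) (at t) \<and> z < 0"
    using Omega_deriv'(1)[OF dW t0] Om1_neg[OF dW neg t0] by blast
qed

theorem lemma4p4:
  fixes W :: "real \<Rightarrow> real" and m :: nat and k b rbar d :: real
  assumes "classW W"
    and "m \<ge> 1" and "k > 0" and "0 < b" and "b < 1"
    and "rbar > 0" and "Omega W rbar = b"
    and "J W rbar < (real m)\<^sup>2 / (4 * k\<^sup>2)"
    and "d \<in> {1/2 + sqrt (1/4 - k\<^sup>2 / (real m)\<^sup>2 * J W rbar),
              1/2 - sqrt (1/4 - k\<^sup>2 / (real m)\<^sup>2 * J W rbar)}"
  shows "\<exists>\<gamma>>0. \<forall>r>rbar.
           opL W m k b (\<lambda>s. (b - Omega W s) powr d) r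
             \<ge> \<gamma> * deriv (\<lambda>s. (b - Omega W s) powr d) r
           \<and> deriv (\<lambda>s. (b - Omega W s) powr d) r > 0"
proof -
  note m = assms(2) and k = assms(3) and b0 = assms(4) and rbar = assms(6) and Ob = assms(7)
  obtain Wd where dW: "\<forall>r\<ge>0. (W has_real_derivative Wd r) (at r within {0..})"
      and neg: "\<forall>r>0. Wd r < 0"
    using assms(1) unfolding classW_def by blast
  have pos: "\<forall>r\<ge>0. W r > 0" using assms(1) unfolding classW_def by blast
  have Jd: "\<forall>r>0. J W differentiable (at r) \<and> deriv (J W) r < 0"
    using assms(1) unfolding classW_def by blast
  have below: "\<forall>s>rbar. Omega W s < b"
    using Omega_decr[OF dW neg rbar] Ob by auto
  have jpos: "J W rbar > 0"
  proof -
    have "Om1 W rbar \<noteq> 0" using Om1_neg[OF dW neg rbar] by simp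
    then show ?thesis using J_eq[OF dW rbar] Ob b0 pos rbar by simp
  qed
  define t where "t = k\<^sup>2 / (real m)\<^sup>2 * J W rbar"
  have mpos: "(real m)\<^sup>2 > 0" using m by simp
  have t0: "t > 0" unfolding t_def using jpos k mpos by simp
  have t1: "t < 1/4"
  proof -
    have "J W rbar * (4 * k\<^sup>2) < (real m)\<^sup>2" using assms(8) k by (simp add: field_simps)
    then show ?thesis unfolding t_def using mpos by (simp add: field_simps)
  qed
  define sq where "sq = sqrt (1/4 - t)"
  have sq0: "sq > 0" unfolding sq_def using t1 by simp
  have sq2: "sq\<^sup>2 = 1/4 - t" unfolding sq_def using t1 by simp
  have sq1: "sq < 1/2"
  proof (rule ccontr)
    assume "\<not> sq < 1/2"
    then have "sq\<^sup>2 \<ge> (1/2)\<^sup>2" by (intro power_mono) auto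
    then show False using sq2 t0 by (simp add: power2_eq_square)
  qed
  have dcases: "d = 1/2 + sq \<or> d = 1/2 - sq" using assms(9) unfolding sq_def t_def by auto
  have d0: "0 < d" and d1: "d \<le> 1" using dcases sq0 sq1 by auto
  have dd: "d * (d - 1) = - (k\<^sup>2 / (real m)\<^sup>2) * J W rbar"
  proof -
    have "d * (d - 1) = sq\<^sup>2 - 1/4"
    proof (cases "d = 1/2 + sq")
      case True then show ?thesis by (simp add: algebra_simps power2_eq_square)
    next
      case False then have dq: "d = 1/2 - sq" using dcases by simp
      have "(1/2 - sq) * ((1/2 - sq) - 1) = sq\<^sup>2 - 1/4" by (simp add: power2_eq_square field_simps)
      then show ?thesis unfolding dq .
    qed
    then show ?thesis using sq2 by (simp add: t_def)
  qed
  have jj: "\<And>r. r > rbar \<Longrightarrow> J W r \<le> J W rbar"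
  proof -
    fix r assume r: "r > rbar"
    show "J W r \<le> J W rbar"
    proof (rule DERIV_nonpos_imp_nonincreasing[of rbar r "J W"])
      show "rbar \<le> r" using r by simp
      fix x assume x: "rbar \<le> x" "x \<le> r"
      then have "x > 0" using rbar by simp
      then have "J W differentiable (at x)" "deriv (J W) x < 0" using Jd by auto
      then show "\<exists>y. (J W has_real_derivative y) (at x) \<and> y \<le> 0"
        using DERIV_deriv_iff_real_differentiable by fastforce
    qed
  qed
  define R where "R = max (rbar + 1) (real m / k)"
  have R1: "R > rbar" "R \<ge> real m / k" unfolding R_def by auto
  define fR where "fR = b - Omega W R"
  have fR0: "fR > 0" using below R1 by (simp add: fR_def)
  define c1 where "c1 = 2 * k\<^sup>2 * rbar ^ 3 / ((real m)\<^sup>2 + k\<^sup>2 * R\<^sup>2)\<^sup>2"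
  define c2 where "c2 = fR * R / (2 * b)"
  have c10: "c1 > 0"
  proof -
    have "(real m)\<^sup>2 + k\<^sup>2 * R\<^sup>2 > 0" using mpos by (simp add: add_pos_nonneg)
    then show ?thesis unfolding c1_def using k rbar by simp
  qed
  have c20: "c2 > 0" unfolding c2_def using fR0 R1 rbar b0 by simp
  define \<gamma> where "\<gamma> = min c1 c2"
  have g0: "\<gamma> > 0" unfolding \<gamma>_def using c10 c20 by simp
  show ?thesis
  proof (intro exI[of _ \<gamma>] conjI allI impI g0)
    fix r assume r: "r > rbar"
    have r0: "r > 0" using r rbar by simp
    have Jr: "deriv (J W) r \<le> 0" using Jd r0 by (simp add: less_imp_le)
    note pw = pointwise[OF dW neg pos k m rbar r below d0 d1 dd jj[OF r] Jr]
    define f where "f = b - Omega W r"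
    define P where "P = (b - Omega W r) powr d"
    define q where "q = - Om1 W r"
    define D where "D = (real m)\<^sup>2 + k\<^sup>2 * r\<^sup>2"
    define E where "E = 1 + (k\<^sup>2 * r\<^sup>2 - (real m)\<^sup>2) / D\<^sup>2"
    have f0: "f > 0" using below r by (simp add: f_def)
    have P0: "P > 0" using f0 by (simp add: P_def f_def)
    have q0: "q > 0" using Om1_neg[OF dW neg r0] by (simp add: q_def)
    have Dpos: "D > 0" unfolding D_def using mpos by (simp add: add_pos_nonneg)
    have du: "deriv (\<lambda>s. (b - Omega W s) powr d) r = d * q * (P / f)"
      using pw(1) by (simp add: q_def P_def f_def)
    have lu: "opL W m k b (\<lambda>s. (b - Omega W s) powr d) r \<ge> P / f * (2 * d * k\<^sup>2 * r ^ 3 * q / D\<^sup>2 + f * E)"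
      using pw(2) by (simp add: q_def P_def f_def D_def E_def)
    have E0: "E > 0"
    proof -
      have "D > (real m)\<^sup>2" unfolding D_def using k r0 by simp
      then have "D\<^sup>2 > ((real m)\<^sup>2)\<^sup>2" using mpos by (intro power_strict_mono) auto
      moreover have "((real m)\<^sup>2)\<^sup>2 \<ge> (real m)\<^sup>2"
        using m by (simp add: power2_eq_square mult_le_cancel_left1 mult_ge1_I)
      ultimately have "D\<^sup>2 + (k\<^sup>2 * r\<^sup>2 - (real m)\<^sup>2) > 0" using k by (smt (verit) zero_le_power2 mult_nonneg_nonneg)
      then show ?thesis unfolding E_def using Dpos by (simp add: field_simps)
    qed
    have main: "2 * d * k\<^sup>2 * r ^ 3 * q / D\<^sup>2 + f * E \<ge> \<gamma> * (d * q)"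
    proof (cases "r \<le> R")
      case True
      have "2 * k\<^sup>2 * r ^ 3 / D\<^sup>2 \<ge> c1"
      proof -
        have "rbar ^ 3 \<le> r ^ 3" using r rbar by (intro power_mono) auto
        moreover have "D \<le> (real m)\<^sup>2 + k\<^sup>2 * R\<^sup>2"
        proof -
          have "r\<^sup>2 \<le> R\<^sup>2" using True r0 by (intro power_mono) auto
          then show ?thesis unfolding D_def by (simp add: mult_left_mono)
        qed
        then have "D\<^sup>2 \<le> ((real m)\<^sup>2 + k\<^sup>2 * R\<^sup>2)\<^sup>2" using Dpos by (intro power_mono) auto
        ultimately show ?thesis unfolding c1_def using k rbar Dpos r0
          by (intro frac_le) (auto intro: mult_left_mono)
      qed
      then have "2 * k\<^sup>2 * r ^ 3 / D\<^sup>2 \<ge> \<gamma>" unfolding \<gamma>_def by simp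
      then have "(2 * k\<^sup>2 * r ^ 3 / D\<^sup>2) * (d * q) \<ge> \<gamma> * (d * q)"
        using d0 q0 by (intro mult_right_mono) auto
      moreover have "f * E \<ge> 0" using f0 E0 by simp
      ultimately show ?thesis by (simp add: field_simps)
    next
      case False
      then have rR: "r > R" by simp
      have E1: "E \<ge> 1"
      proof -
        have "real m \<le> R * k" using R1(2) k by (simp add: field_simps)
        also have "R * k \<le> k * r" using rR k by simp
        finally have "k * r \<ge> real m" .
        then have "(k * r)\<^sup>2 \<ge> (real m)\<^sup>2" by (intro power_mono) auto
        then show ?thesis unfolding E_def using Dpos by (simp add: power_mult_distrib)
      qed
      have ffR: "f \<ge> fR"
        using Omega_decr[OF dW neg _ rR] R1 rbar by (simp add: f_def fR_def)
      have qb: "q < 2 * b / R"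
      proof -
        have "r * q = 2 * Omega W r - W r" using r0 by (simp add: q_def Om1_def)
        moreover have "W r > 0" using pos r0 by simp
        moreover have "Omega W r < b" using below r by simp
        ultimately have "r * q < 2 * b" by linarith
        then have "q < 2 * b / r" using r0 by (simp add: field_simps)
        also have "2 * b / r < 2 * b / R" using rR R1 rbar b0 by (intro divide_strict_left_mono) auto
        finally show ?thesis .
      qed
      have "\<gamma> * (d * q) \<le> c2 * q"
      proof -
        have "\<gamma> * d \<le> c2 * 1" using d0 d1 c20 unfolding \<gamma>_def
          by (intro mult_mono) auto
        then show ?thesis using q0 by (metis mult.assoc mult.commute mult_1_right mult_right_mono less_imp_le)
      qed
      also have "c2 * q < c2 * (2 * b / R)" using mult_strict_left_mono[OF qb c20] .
      also have "c2 * (2 * b / R) = fR" unfolding c2_def using b0 R1 rbar by simp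
      also have "fR \<le> f * E" using ffR E1 f0 by (smt (verit) mult_left_mono mult_cancel_left1)
      finally have "\<gamma> * (d * q) < f * E" .
      moreover have "2 * d * k\<^sup>2 * r ^ 3 * q / D\<^sup>2 \<ge> 0" using d0 q0 r0 by simp
      ultimately show ?thesis by linarith
    qed
    have PF: "P / f > 0" using P0 f0 by simp
    have "P / f * (\<gamma> * (d * q)) \<le> P / f * (2 * d * k\<^sup>2 * r ^ 3 * q / D\<^sup>2 + f * E)"
      using main PF by (intro mult_left_mono) auto
    then show "opL W m k b (\<lambda>s. (b - Omega W s) powr d) r \<ge> \<gamma> * deriv (\<lambda>s. (b - Omega W s) powr d) r"
      using lu unfolding du by (simp add: algebra_simps)
    show "deriv (\<lambda>s. (b - Omega W s) powr d) r > 0"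
      unfolding du using d0 q0 PF by (intro mult_pos_pos)
  qed
qed

end
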